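(* Let $B$, $C$ be unital $\mathrm{C}^*$-algebras, let $\{\phi_i\}_{i=1}^m$, $\{\psi_j\}_{j=1}^n$ be families of surjective $*$-homomorphisms $B\to C$, and let $[c_{ij}]\in M_{m,n}(C)$ satisfy $\phi_i(b)c_{ij}=c_{ij}\psi_j(b)$ for all $b\in B$, $1\le i\le m$, $1\le j\le n$. (i) If $F_\pi\in M_n(C)$ is the permutation matrix of a permutation $\pi\in S_n$ (so that $[c_{ij}]F_\pi$ has $(i,j)$ entry $c_{i\pi(j)}$), then $[c_{ij}]F_\pi$ intertwines $\{\phi_i\}_{i=1}^m$ and $\{\psi_{\pi(j)}\}_{j=1}^n$, i.e. $\phi_i(b)c_{i\pi(j)}=c_{i\pi(j)}\psi_{\pi(j)}(b)$ for all $b,i,j$. (ii) If $c_{kk}$ is invertible, $h\ne k$, and $E_{hk}\in M_m(C)$ is the matrix of the elementary row operation that adds the $k$-th row multiplied on the left by $-c_{hk}c_{kk}^{-1}$ to the $h$-th row, then $E_{hk}[c_{ij}]=[c'_{ij}]$ again satisfies $\phi_i(b)c'_{ij}=c'_{ij}\psi_j(b)$ for all $b\in B$, $1\le i\le m$, $1\le j\le n$. *)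

theory Defs
  imports Complex_Main "HOL-Combinatorics.Permutations"
begin

class cstar_algebra = banach + real_normed_algebra_1 +
  fixes scaleC :: "complex \<Rightarrow> 'a \<Rightarrow> 'a"
    and adj :: "'a \<Rightarrow> 'a"
  assumes scaleC_of_real: "scaleC (complex_of_real r) x = scaleR r x"
    and scaleC_add_right: "scaleC a (x + y) = scaleC a x + scaleC a y"
    and scaleC_add_left: "scaleC (a + b) x = scaleC a x + scaleC b x"
    and scaleC_scaleC: "scaleC a (scaleC b x) = scaleC (a * b) x"
    and scaleC_one: "scaleC 1 x = x"
    and scaleC_mult_left: "scaleC a (x * y) = scaleC a x * y"
    and scaleC_mult_right: "scaleC a (x * y) = x * scaleC a y"
    and norm_scaleC: "norm (scaleC a x) = cmod a * norm x"
    and adj_adj: "adj (adj x) = x"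
    and adj_add: "adj (x + y) = adj x + adj y"
    and adj_mult: "adj (x * y) = adj y * adj x"
    and adj_scaleC: "adj (scaleC a x) = scaleC (cnj a) (adj x)"
    and cstar_identity: "norm (adj x * x) = (norm x)\<^sup>2"

definition star_hom :: "('b::cstar_algebra \<Rightarrow> 'c::cstar_algebra) \<Rightarrow> bool" where
  "star_hom f \<longleftrightarrow>
     (\<forall>x y. f (x + y) = f x + f y) \<and>
     (\<forall>a x. f (scaleC a x) = scaleC a (f x)) \<and>
     (\<forall>x y. f (x * y) = f x * f y) \<and>
     (\<forall>x. f (adj x) = adj (f x))"

text \<open>Matrices over a ring, indexed from 1: functions nat \<Rightarrow> nat \<Rightarrow> 'a,
with explicit sizes.\<close>
definition matmul :: "nat \<Rightarrow> (nat \<Rightarrow> nat \<Rightarrow> 'a::semiring_0) \<Rightarrow> (nat \<Rightarrow> nat \<Rightarrow> 'a) \<Rightarrow> nat \<Rightarrow> nat \<Rightarrow> 'a" where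
  "matmul k A B = (\<lambda>i j. \<Sum>l=1..k. A i l * B l j)"

definition perm_matrix :: "(nat \<Rightarrow> nat) \<Rightarrow> nat \<Rightarrow> nat \<Rightarrow> 'a::zero_neq_one" where
  "perm_matrix \<pi> = (\<lambda>i j. if i = \<pi> j then 1 else 0)"

definition invertible_elem :: "'a::ring_1 \<Rightarrow> bool" where
  "invertible_elem x \<longleftrightarrow> (\<exists>y. x * y = 1 \<and> y * x = 1)"

definition inv_elem :: "'a::ring_1 \<Rightarrow> 'a" where
  "inv_elem x = (THE y. x * y = 1 \<and> y * x = 1)"

definition elem_row_matrix :: "nat \<Rightarrow> nat \<Rightarrow> (nat \<Rightarrow> nat \<Rightarrow> 'a::ring_1) \<Rightarrow> nat \<Rightarrow> nat \<Rightarrow> 'a" where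
  "elem_row_matrix h k c = (\<lambda>i j. (if i = j then 1 else 0)
      + (if i = h \<and> j = k then - (c h k * inv_elem (c k k)) else 0))"

definition intertwines ::
  "nat \<Rightarrow> nat \<Rightarrow> (nat \<Rightarrow> 'b \<Rightarrow> 'c::ring) \<Rightarrow> (nat \<Rightarrow> 'b \<Rightarrow> 'c) \<Rightarrow> (nat \<Rightarrow> nat \<Rightarrow> 'c) \<Rightarrow> bool" where
  "intertwines m n \<phi> \<psi> c \<longleftrightarrow>
     (\<forall>b. \<forall>i\<in>{1..m}. \<forall>j\<in>{1..n}. \<phi> i b * c i j = c i j * \<psi> j b)"

end

theory Submission
  imports Defs
begin

lemma inv_elem_props:
  fixes x :: "'a::ring_1"
  assumes "invertible_elem x"
  shows "x * inv_elem x = 1 \<and> inv_elem x * x = 1"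
proof -
  obtain y where y: "x * y = 1" "y * x = 1" using assms unfolding invertible_elem_def by blast
  have u: "\<And>z. x * z = 1 \<and> z * x = 1 \<Longrightarrow> z = y"
  proof -
    fix z assume z: "x * z = 1 \<and> z * x = 1"
    have "z = (y * x) * z" using y by simp
    also have "\<dots> = y * (x * z)" by (simp add: mult.assoc)
    finally show "z = y" using z by simp
  qed
  have "inv_elem x = y" unfolding inv_elem_def
  proof (rule the_equality)
    show "x * y = 1 \<and> y * x = 1" using y by simp
  next
    fix z assume "x * z = 1 \<and> z * x = 1"
    thus "z = y" by (rule u)
  qed
  thus ?thesis using y by simp
qed

lemma sum_delta_mult:
  fixes c :: "nat \<Rightarrow> 'a::ring_1"
  assumes "i \<in> {1..m::nat}"
  shows "(\<Sum>l=1..m. (if i = l then 1 else 0) * c l) = c i"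
proof -
  have "(\<Sum>l=1..m. (if i = l then 1 else 0) * c l) = (\<Sum>l=1..m. if i = l then c l else 0)"
    by (rule sum.cong) auto
  also have "\<dots> = c i" using assms by (simp add: sum.delta)
  finally show ?thesis .
qed

theorem lemma3p2:
  fixes \<phi> \<psi> :: "nat \<Rightarrow> 'b::cstar_algebra \<Rightarrow> 'c::cstar_algebra"
    and c :: "nat \<Rightarrow> nat \<Rightarrow> 'c"
    and m n :: nat
  assumes phi_hom: "\<forall>i\<in>{1..m}. star_hom (\<phi> i) \<and> surj (\<phi> i)"
    and psi_hom: "\<forall>j\<in>{1..n}. star_hom (\<psi> j) \<and> surj (\<psi> j)"
    and intw: "intertwines m n \<phi> \<psi> c"
  shows "(\<forall>\<pi>. \<pi> permutes {1..n} \<longrightarrow>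
            intertwines m n \<phi> (\<lambda>j. \<psi> (\<pi> j)) (matmul n c (perm_matrix \<pi>)))
       \<and> (\<forall>h k. h \<in> {1..m} \<and> k \<in> {1..m} \<and> k \<in> {1..n} \<and> h \<noteq> k
               \<and> invertible_elem (c k k) \<longrightarrow>
            intertwines m n \<phi> \<psi> (matmul m (elem_row_matrix h k c) c))"
proof (intro conjI allI impI)
  have I: "\<And>b i j. i \<in> {1..m} \<Longrightarrow> j \<in> {1..n} \<Longrightarrow> \<phi> i b * c i j = c i j * \<psi> j b"
    using intw unfolding intertwines_def by blast
  fix \<pi> assume p: "\<pi> permutes {1..n}"
  show "intertwines m n \<phi> (\<lambda>j. \<psi> (\<pi> j)) (matmul n c (perm_matrix \<pi>))"
    unfolding intertwines_def
  proof (intro allI ballI)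
    fix b i j assume i: "i \<in> {1..m}" and j: "j \<in> {1..n}"
    have pj: "\<pi> j \<in> {1..n}" using permutes_in_image[OF p] j by blast
    have "matmul n c (perm_matrix \<pi>) i j = c i (\<pi> j)"
    proof -
      have "matmul n c (perm_matrix \<pi>) i j = (\<Sum>l=1..n. if \<pi> j = l then c i l else 0)"
        unfolding matmul_def perm_matrix_def by (rule sum.cong) auto
      also have "\<dots> = c i (\<pi> j)" using pj by (simp add: sum.delta)
      finally show ?thesis .
    qed
    thus "\<phi> i b * matmul n c (perm_matrix \<pi>) i j = matmul n c (perm_matrix \<pi>) i j * \<psi> (\<pi> j) b"
      using I[OF i pj] by simp
  qed
next
  have I: "\<And>b i j. i \<in> {1..m} \<Longrightarrow> j \<in> {1..n} \<Longrightarrow> \<phi> i b * c i j = c i j * \<psi> j b"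
    using intw unfolding intertwines_def by blast
  fix h k assume a: "h \<in> {1..m} \<and> k \<in> {1..m} \<and> k \<in> {1..n} \<and> h \<noteq> k \<and> invertible_elem (c k k)"
  define x where "x = inv_elem (c k k)"
  have inv: "c k k * x = 1" "x * c k k = 1" using inv_elem_props[of "c k k"] a x_def by auto
  show "intertwines m n \<phi> \<psi> (matmul m (elem_row_matrix h k c) c)"
    unfolding intertwines_def
  proof (intro allI ballI)
    fix b i j assume i: "i \<in> {1..m}" and j: "j \<in> {1..n}"
    have expand: "matmul m (elem_row_matrix h k c) c i j =
       c i j + (if i = h then - (c h k * x) * c k j else 0)"
    proof -
      have "matmul m (elem_row_matrix h k c) c i j =
         (\<Sum>l=1..m. (if i = l then 1 else 0) * c l j) +
         (\<Sum>l=1..m. (if i = h \<and> l = k then - (c h k * x) else 0) * c l j)"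
        unfolding matmul_def elem_row_matrix_def x_def distrib_right by (rule sum.distrib)
      also have "(\<Sum>l=1..m. (if i = l then 1 else 0) * c l j) = c i j"
        using sum_delta_mult[OF i] .
      also have "(\<Sum>l=1..m. (if i = h \<and> l = k then - (c h k * x) else 0) * c l j)
          = (\<Sum>l=1..m. if k = l then (if i = h then - (c h k * x) * c k j else 0) else 0)"
        by (rule sum.cong) auto
      also have "\<dots> = (if i = h then - (c h k * x) * c k j else 0)"
        using a by (simp add: sum.delta)
      finally show ?thesis .
    qed
    have key: "\<phi> h b * (c h k * x * c k j) = (c h k * x * c k j) * \<psi> j b"
    proof -
      have kk: "\<phi> k b * c k k = c k k * \<psi> k b" using I a by blast
      have xk: "x * \<phi> k b = \<psi> k b * x"
      proof -
        have "x * \<phi> k b = x * \<phi> k b * (c k k * x)" using inv by simp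
        also have "\<dots> = x * (\<phi> k b * c k k) * x" by (simp add: mult.assoc)
        also have "\<dots> = (x * c k k) * \<psi> k b * x" using kk by (simp add: mult.assoc)
        finally show ?thesis using inv by simp
      qed
      have "\<phi> h b * (c h k * x * c k j) = (\<phi> h b * c h k) * x * c k j" by (simp add: mult.assoc)
      also have "\<dots> = c h k * (\<psi> k b * x) * c k j" using I[of h k b] a by (simp add: mult.assoc)
      also have "\<dots> = c h k * (x * \<phi> k b) * c k j" using xk by simp
      also have "\<dots> = c h k * x * (\<phi> k b * c k j)" by (simp add: mult.assoc)
      also have "\<dots> = c h k * x * (c k j * \<psi> j b)" using I[of k j b] a j by simp
      finally show ?thesis by (simp add: mult.assoc)
    qed
    show "\<phi> i b * matmul m (elem_row_matrix h k c) c i j = matmul m (elem_row_matrix h k c) c i j * \<psi> j b"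
    proof (cases "i = h")
      case True
      have k2: "\<phi> h b * (- (c h k * x) * c k j) = (- (c h k * x) * c k j) * \<psi> j b"
        using key by simp
      show ?thesis unfolding expand using True I[OF i j] k2
        by (simp only: distrib_left distrib_right if_True simp_thms)
    next
      case False
      show ?thesis unfolding expand using False I[OF i j] by simp
    qed
  qed
qed

end
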